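(* Let $M\ge 1$ users be located at $\boldsymbol\psi_m=(x_m,y_m,0)$, $1\le m\le M$, with $-\frac{D_{\rm L}}{2}\le x_m\le \frac{D_{\rm L}}{2}$ and $-\frac{D_{\rm W}}{2}\le y_m\le \frac{D_{\rm W}}{2}$, and let a single antenna be placed at $(x,0,d)$ with $d>0$. For transmit powers $P_m\ge 0$ define $$R_m^{\rm OMA}=\frac{1}{M}\log\left(1+\frac{\eta P_m}{\sigma^2\big((x-x_m)^2+y_m^2+d^2\big)}\right),$$ where $\eta>0$, $\sigma^2>0$. Consider the problem $$\max_{P_1,\dots,P_M\ge 0,\ x}\ \min\{R_1^{\rm OMA},\dots,R_M^{\rm OMA}\}\quad\text{s.t.}\quad \sum_{m=1}^M P_m\le P,\quad -\frac{D_{\rm L}}{2}\le x\le \frac{D_{\rm L}}{2},$$ with $P>0$. Then an optimal antenna location is $$x^*=\frac{1}{M}\sum_{m=1}^M x_m,$$ and the optimal transmit powers are $$P_m^*=\frac{\tau_{mx^*}}{\sum_{i=1}^M\tau_{ix^*}}P,\qquad 1\le m\le M,$$ where $\tau_{mx^*}=(x^*-x_m)^2+y_m^2+d^2$.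
   Context: This models a pinching-antenna system: a single pinching antenna activated at point $(x,0,d)$ on a waveguide at height $d$ above the centre line of a rectangular service area of sides $D_{\rm L}$ (along the waveguide) and $D_{\rm W}$; users are served by time-division multiple access over $M$ slots (hence the factor $1/M$). $\eta=\frac{c^2}{16\pi^2 f_c^2}$ with $c$ the speed of light and $f_c$ the carrier frequency; $\sigma^2$ is the noise power; $\log$ is the natural logarithm. *)

theory Defs
  imports Complex_Main
begin

(* Users are indexed by m \<in> {0..<M}; user m is at (xs m, ys m, 0). *)

definition tau :: "(nat \<Rightarrow> real) \<Rightarrow> (nat \<Rightarrow> real) \<Rightarrow> real \<Rightarrow> real \<Rightarrow> nat \<Rightarrow> real" where
  "tau xs ys d x m = (x - xs m)^2 + (ys m)^2 + d^2"

definition R_OMA :: "nat \<Rightarrow> real \<Rightarrow> real \<Rightarrow> (nat \<Rightarrow> real) \<Rightarrow> (nat \<Rightarrow> real) \<Rightarrow> real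
    \<Rightarrow> (nat \<Rightarrow> real) \<Rightarrow> real \<Rightarrow> nat \<Rightarrow> real" where
  "R_OMA M eta sigma2 xs ys d p x m =
     (1 / real M) * ln (1 + eta * p m / (sigma2 * tau xs ys d x m))"

definition min_rate :: "nat \<Rightarrow> real \<Rightarrow> real \<Rightarrow> (nat \<Rightarrow> real) \<Rightarrow> (nat \<Rightarrow> real) \<Rightarrow> real
    \<Rightarrow> (nat \<Rightarrow> real) \<Rightarrow> real \<Rightarrow> real" where
  "min_rate M eta sigma2 xs ys d p x = Min ((\<lambda>m. R_OMA M eta sigma2 xs ys d p x m) ` {..<M})"

definition feasible :: "nat \<Rightarrow> real \<Rightarrow> real \<Rightarrow> (nat \<Rightarrow> real) \<Rightarrow> real \<Rightarrow> bool" where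
  "feasible M DL Ptot p x \<longleftrightarrow>
     (\<forall>m<M. 0 \<le> p m) \<and> (\<Sum>m<M. p m) \<le> Ptot \<and> - DL / 2 \<le> x \<and> x \<le> DL / 2"

end

theory Submission
  imports Defs
begin

lemma tau_pos: "d > 0 \<Longrightarrow> tau xs ys d x m > 0"
  unfolding tau_def by (simp add: add_nonneg_pos)

lemma sum_tau_min:
  fixes xs ys :: "nat \<Rightarrow> real"
  assumes "M \<ge> 1"
  defines "xstar \<equiv> (1 / real M) * (\<Sum>m<M. xs m)"
  shows "(\<Sum>i<M. tau xs ys d xstar i) \<le> (\<Sum>i<M. tau xs ys d x i)"
proof -
  have z: "(\<Sum>m<M. (xstar - xs m)) = 0"
    using assms by (simp add: sum_subtractf xstar_def)
  have "(\<Sum>i<M. tau xs ys d x i) = (\<Sum>i<M. tau xs ys d xstar i) + 2*(x - xstar) * (\<Sum>m<M. (xstar - xs m)) + real M * (x - xstar)^2"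
  proof -
    have pw: "tau xs ys d x i = tau xs ys d xstar i + 2*(x - xstar) * (xstar - xs i) + (x - xstar)^2" for i
      unfolding tau_def by (simp add: power2_eq_square algebra_simps)
    show ?thesis unfolding pw by (simp add: sum.distrib sum_distrib_left)
  qed
  with z show ?thesis by simp
qed

lemma exists_small:
  fixes p t :: "nat \<Rightarrow> real"
  assumes "M \<ge> 1" "\<And>m. m < M \<Longrightarrow> t m > 0"
  shows "\<exists>m<M. p m / t m \<le> (\<Sum>i<M. p i) / (\<Sum>i<M. t i)"
proof (rule ccontr)
  assume "\<not> ?thesis"
  hence h: "\<And>m. m < M \<Longrightarrow> p m > (\<Sum>i<M. p i) / (\<Sum>i<M. t i) * t m"
    using assms(2) by (auto simp: not_le pos_less_divide_eq)
  have St: "(\<Sum>i<M. t i) > 0" using assms by (intro sum_pos) (auto simp: lessThan_empty_iff)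
  have "(\<Sum>m<M. (\<Sum>i<M. p i) / (\<Sum>i<M. t i) * t m) < (\<Sum>m<M. p m)"
    using assms(1) h by (intro sum_strict_mono) (auto simp: lessThan_empty_iff)
  also have "(\<Sum>m<M. (\<Sum>i<M. p i) / (\<Sum>i<M. t i) * t m) = (\<Sum>m<M. p m)"
    using St by (subst sum_distrib_left[symmetric]) simp
  finally show False by simp
qed

theorem lemma1:
  fixes M :: nat and xs ys :: "nat \<Rightarrow> real" and DL DW d eta sigma2 Ptot :: real
  assumes "M \<ge> 1"
    and "\<And>m. m < M \<Longrightarrow> - DL / 2 \<le> xs m \<and> xs m \<le> DL / 2"
    and "\<And>m. m < M \<Longrightarrow> - DW / 2 \<le> ys m \<and> ys m \<le> DW / 2"
    and "d > 0" and "eta > 0" and "sigma2 > 0" and "Ptot > 0"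
  defines "xstar \<equiv> (1 / real M) * (\<Sum>m<M. xs m)"
  defines "pstar \<equiv> (\<lambda>m. tau xs ys d xstar m / (\<Sum>i<M. tau xs ys d xstar i) * Ptot)"
  shows "feasible M DL Ptot pstar xstar \<and>
         (\<forall>p x. feasible M DL Ptot p x \<longrightarrow>
            min_rate M eta sigma2 xs ys d p x \<le> min_rate M eta sigma2 xs ys d pstar xstar)"
proof -
  define S where "S = (\<Sum>i<M. tau xs ys d xstar i)"
  have tp: "\<And>x m. tau xs ys d x m > 0" using assms(4) tau_pos by blast
  have Spos: "S > 0" unfolding S_def using assms(1) tp by (intro sum_pos) (auto simp: lessThan_empty_iff)
  have Mpos: "real M > 0" using assms(1) by simp
  have sumx1: "(\<Sum>m<M. xs m) \<le> real M * (DL/2)"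
    using sum_mono[of "{..<M}" xs "\<lambda>_. DL/2"] assms(2) by simp
  have sumx2: "real M * (-DL/2) \<le> (\<Sum>m<M. xs m)"
    using sum_mono[of "{..<M}" "\<lambda>_. -DL/2" xs] assms(2) by simp
  have xr: "- DL / 2 \<le> xstar \<and> xstar \<le> DL / 2"
    unfolding xstar_def using sumx1 sumx2 Mpos
    by (auto simp: field_simps)
  have psum: "(\<Sum>m<M. pstar m) = Ptot"
    unfolding pstar_def using Spos[unfolded S_def]
    by (simp add: sum_distrib_right[symmetric] sum_divide_distrib[symmetric])
  have feas: "feasible M DL Ptot pstar xstar"
    unfolding feasible_def using xr psum tp Spos assms(7)
    by (auto simp: pstar_def S_def[symmetric] intro!: mult_nonneg_nonneg divide_nonneg_nonneg less_imp_le)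
  define V where "V = (1 / real M) * ln (1 + eta * (Ptot / S) / sigma2)"
  have Rstar: "R_OMA M eta sigma2 xs ys d pstar xstar k = V" for k
  proof -
    have "eta * pstar k / (sigma2 * tau xs ys d xstar k) = eta * (Ptot / S) / sigma2"
      unfolding pstar_def S_def[symmetric] using tp[of xstar k] Spos assms(6)
      by (simp add: field_simps)
    thus ?thesis unfolding R_OMA_def V_def by simp
  qed
  have fin: "finite ((\<lambda>m. R_OMA M eta sigma2 xs ys d pstar xstar m) ` {..<M})" by simp
  have ne: "(\<lambda>m. R_OMA M eta sigma2 xs ys d pstar xstar m) ` {..<M} \<noteq> {}" using assms(1) by (auto simp: lessThan_empty_iff)
  have minstar: "min_rate M eta sigma2 xs ys d pstar xstar = V"
    unfolding min_rate_def
    by (rule antisym) (use fin ne Rstar in \<open>auto simp: Min_le_iff Min_ge_iff\<close>)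
  have opt: "min_rate M eta sigma2 xs ys d p x \<le> V" if f: "feasible M DL Ptot p x" for p x
  proof -
    from f have p0: "\<And>m. m < M \<Longrightarrow> p m \<ge> 0" and ps: "(\<Sum>m<M. p m) \<le> Ptot"
      unfolding feasible_def by auto
    obtain m where m: "m < M" "p m / tau xs ys d x m \<le> (\<Sum>i<M. p i) / (\<Sum>i<M. tau xs ys d x i)"
      using exists_small[OF assms(1), of "tau xs ys d x" p] tp by blast
    have Sx: "S \<le> (\<Sum>i<M. tau xs ys d x i)"
      unfolding S_def xstar_def by (rule sum_tau_min[OF assms(1)])
    have "(\<Sum>i<M. p i) / (\<Sum>i<M. tau xs ys d x i) \<le> Ptot / (\<Sum>i<M. tau xs ys d x i)"
      using ps Spos Sx by (intro divide_right_mono) auto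
    also have "\<dots> \<le> Ptot / S" using Spos Sx assms(7) by (intro divide_left_mono) auto
    finally have r: "p m / tau xs ys d x m \<le> Ptot / S" using m(2) by linarith
    have r0: "p m / tau xs ys d x m \<ge> 0" using p0[OF m(1)] tp[of x m] by simp
    have eq: "eta * p m / (sigma2 * tau xs ys d x m) = eta * (p m / tau xs ys d x m) / sigma2"
      by (simp add: field_simps)
    have "eta * (p m / tau xs ys d x m) / sigma2 \<le> eta * (Ptot / S) / sigma2"
      using r assms(5,6) by (intro divide_right_mono mult_left_mono) auto
    moreover have "0 \<le> eta * (p m / tau xs ys d x m) / sigma2" using p0[OF m(1)] tp[of x m] assms(5,6) by simp
    ultimately have "ln (1 + eta * p m / (sigma2 * tau xs ys d x m)) \<le> ln (1 + eta * (Ptot / S) / sigma2)"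
      unfolding eq by (subst ln_le_cancel_iff) auto
    hence "R_OMA M eta sigma2 xs ys d p x m \<le> V"
      unfolding R_OMA_def V_def using Mpos by (intro mult_left_mono) auto
    moreover have "min_rate M eta sigma2 xs ys d p x \<le> R_OMA M eta sigma2 xs ys d p x m"
      unfolding min_rate_def using m(1) by (intro Min_le) auto
    ultimately show ?thesis by linarith
  qed
  show ?thesis using feas opt minstar by auto
qed

end
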